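(* Let $H$ be a complex Hilbert space and let $\varphi_n,\psi_n\in C[0,1]$ ($n\ge1$) be real-valued with $\varphi_n\to1$ and $\psi_n\to0$ (pointwise on $[0,1]$) as $n\to\infty$. Then for every $t\in[0,1]$, $\lim_{n\to\infty}n_t(\varphi_n,\psi_n;H)=\frac12$.
   Context: $S_1(H)$ is the unit sphere of $H$; for real $\varphi,\psi$ on $[0,1]$, $\omega_t(\varphi,\psi;A)=\sup_{x\in S_1(H)}|\langle(\varphi(t)A+\psi(t)A^* )x,x\rangle|$, and the weighted numerical index is $n_t(\varphi,\psi;H)=\inf\{\omega_t(\varphi,\psi;A):A\in\mathbb{B}(H),\ \|A\|=1\}$. *)

theory Defs
  imports "HOL-Analysis.Analysis"
begin

text \<open>The library only provides real inner product spaces, so we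
introduce a type class of complex Hilbert spaces: a real Banach space carrying a complex
scalar multiplication compatible with the real one, and a complex inner product (linear in
the first argument, conjugate symmetric, positive definite) inducing the norm.\<close>

class chilbert_space = banach +
  fixes scaleC :: "complex \<Rightarrow> 'a \<Rightarrow> 'a"
  fixes cinner :: "'a \<Rightarrow> 'a \<Rightarrow> complex"
  assumes scaleC_add_right: "scaleC a (x + y) = scaleC a x + scaleC a y"
  and scaleC_add_left: "scaleC (a + b) x = scaleC a x + scaleC b x"
  and scaleC_scaleC: "scaleC a (scaleC b x) = scaleC (a * b) x"
  and scaleC_one: "scaleC 1 x = x"
  and scaleR_scaleC: "scaleR r x = scaleC (complex_of_real r) x"
  and cinner_commute: "cinner x y = cnj (cinner y x)"
  and cinner_add_left: "cinner (x + y) z = cinner x z + cinner y z"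
  and cinner_scaleC_left: "cinner (scaleC a x) y = a * cinner x y"
  and cinner_self_real: "Im (cinner x x) = 0"
  and cinner_self_nonneg: "0 \<le> Re (cinner x x)"
  and cinner_self_eq_zero: "cinner x x = 0 \<longleftrightarrow> x = 0"
  and norm_eq_sqrt_cinner: "norm x = sqrt (Re (cinner x x))"

definition bounded_clinear :: "('a::chilbert_space \<Rightarrow> 'a) \<Rightarrow> bool" where
  "bounded_clinear A \<longleftrightarrow> bounded_linear A \<and> (\<forall>c x. A (scaleC c x) = scaleC c (A x))"

text \<open>Hilbert space adjoint (unique by nondegeneracy; exists by Riesz).\<close>
definition cadjoint :: "('a::chilbert_space \<Rightarrow> 'a) \<Rightarrow> ('a \<Rightarrow> 'a)" where
  "cadjoint A = (SOME B. \<forall>x y. cinner (A x) y = cinner x (B y))"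

definition weighted_numerical_radius ::
  "(real \<Rightarrow> real) \<Rightarrow> (real \<Rightarrow> real) \<Rightarrow> real \<Rightarrow> ('a::chilbert_space \<Rightarrow> 'a) \<Rightarrow> real" where
  "weighted_numerical_radius \<phi> \<psi> t A =
     (SUP x\<in>{x::'a. norm x = 1}.
        cmod (cinner (scaleR (\<phi> t) (A x) + scaleR (\<psi> t) (cadjoint A x)) x))"

definition weighted_numerical_index ::
  "'a::chilbert_space itself \<Rightarrow> (real \<Rightarrow> real) \<Rightarrow> (real \<Rightarrow> real) \<Rightarrow> real \<Rightarrow> real" where
  "weighted_numerical_index _ \<phi> \<psi> t =
     (INF A\<in>{A::'a \<Rightarrow> 'a. bounded_clinear A \<and> onorm A = 1}. weighted_numerical_radius \<phi> \<psi> t A)"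

end

theory Submission
  imports Defs
begin


lemma scaleC_zero_left[simp]: "scaleC 0 (x::'a::chilbert_space) = 0"
  using scaleR_scaleC[of 0 x] by simp

lemma scaleC_zero_right[simp]: "scaleC a (0::'a::chilbert_space) = 0"
  using scaleC_add_right[of a 0 0] by simp

lemma scaleC_minus_right: "scaleC a (- (x::'a::chilbert_space)) = - scaleC a x"
proof -
  have "scaleC a x + scaleC a (-x) = scaleC a (x + -x)" by (rule scaleC_add_right[symmetric])
  also have "\<dots> = 0" by simp
  finally have "scaleC a x + scaleC a (-x) = 0" .
  then show ?thesis by (rule minus_unique[symmetric])
qed

lemma scaleC_diff_right: "scaleC a ((x::'a::chilbert_space) - y) = scaleC a x - scaleC a y"
  unfolding diff_conv_add_uminus by (simp only: scaleC_add_right scaleC_minus_right)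

lemma cinner_zero_left[simp]: "cinner (0::'a::chilbert_space) y = 0"
  using cinner_add_left[of 0 0 y] by simp

lemma cinner_zero_right[simp]: "cinner (x::'a::chilbert_space) 0 = 0"
  using cinner_commute[of x 0] by simp

lemma cinner_add_right: "cinner (x::'a::chilbert_space) (y + z) = cinner x y + cinner x z"
proof -
  have "cinner x (y + z) = cnj (cinner (y + z) x)" by (rule cinner_commute)
  also have "\<dots> = cnj (cinner y x) + cnj (cinner z x)" by (simp add: cinner_add_left)
  finally show ?thesis by (simp add: cinner_commute[of x y] cinner_commute[of x z])
qed

lemma cinner_scaleC_right: "cinner (x::'a::chilbert_space) (scaleC a y) = cnj a * cinner x y"
proof -
  have "cinner x (scaleC a y) = cnj (cinner (scaleC a y) x)" by (rule cinner_commute)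
  also have "\<dots> = cnj a * cnj (cinner y x)" by (simp add: cinner_scaleC_left)
  finally show ?thesis by (simp add: cinner_commute[of x y])
qed

lemma cinner_minus_left: "cinner (- (x::'a::chilbert_space)) y = - cinner x y"
proof -
  have "cinner x y + cinner (-x) y = cinner (x + -x) y" by (rule cinner_add_left[symmetric])
  also have "\<dots> = 0" by simp
  finally have "cinner x y + cinner (-x) y = 0" .
  then show ?thesis by (rule minus_unique[symmetric])
qed

lemma cinner_minus_right: "cinner (x::'a::chilbert_space) (- y) = - cinner x y"
proof -
  have "cinner x y + cinner x (-y) = cinner x (y + -y)" by (rule cinner_add_right[symmetric])
  also have "\<dots> = 0" by simp
  finally have "cinner x y + cinner x (-y) = 0" .
  then show ?thesis by (rule minus_unique[symmetric])
qed

lemma cinner_diff_left: "cinner ((x::'a::chilbert_space) - y) z = cinner x z - cinner y z"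
  unfolding diff_conv_add_uminus by (simp only: cinner_add_left cinner_minus_left)

lemma cinner_diff_right: "cinner (x::'a::chilbert_space) (y - z) = cinner x y - cinner x z"
  unfolding diff_conv_add_uminus by (simp only: cinner_add_right cinner_minus_right)

lemma cinner_scaleR_left: "cinner (scaleR r (x::'a::chilbert_space)) y = of_real r * cinner x y"
  by (simp add: scaleR_scaleC cinner_scaleC_left)

lemma cinner_scaleR_right: "cinner (x::'a::chilbert_space) (scaleR r y) = of_real r * cinner x y"
  by (simp add: scaleR_scaleC cinner_scaleC_right)

lemma cinner_self: "cinner (x::'a::chilbert_space) x = of_real ((norm x)^2)"
proof -
  have "(norm x)^2 = Re (cinner x x)" using norm_eq_sqrt_cinner[of x] cinner_self_nonneg[of x] by simp
  then show ?thesis using cinner_self_real[of x] by (simp add: complex_eq_iff)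
qed

lemma norm_sq_Re: "(norm (x::'a::chilbert_space))^2 = Re (cinner x x)"
  by (simp add: cinner_self)

lemma norm_add_sq: "(norm ((x::'a::chilbert_space) + y))^2 = (norm x)^2 + (norm y)^2 + 2 * Re (cinner x y)"
proof -
  have "Re (cinner y x) = Re (cinner x y)" by (simp add: cinner_commute[of y x])
  then show ?thesis unfolding norm_sq_Re by (simp add: cinner_add_left cinner_add_right)
qed

lemma norm_diff_sq: "(norm ((x::'a::chilbert_space) - y))^2 = (norm x)^2 + (norm y)^2 - 2 * Re (cinner x y)"
proof -
  have "Re (cinner y x) = Re (cinner x y)" by (simp add: cinner_commute[of y x])
  then show ?thesis unfolding norm_sq_Re by (simp add: cinner_diff_left cinner_diff_right)
qed

lemma norm_scaleC: "norm (scaleC c (x::'a::chilbert_space)) = cmod c * norm x"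
proof -
  have "cinner (scaleC c x) (scaleC c x) = (c * cnj c) * cinner x x"
    by (simp add: cinner_scaleC_left cinner_scaleC_right)
  also have "\<dots> = of_real ((cmod c * norm x)^2)"
    by (simp add: cinner_self complex_norm_square[symmetric] power_mult_distrib)
  finally have "(norm (scaleC c x))^2 = (cmod c * norm x)^2"
    by (metis cinner_self of_real_eq_iff)
  then show ?thesis by (simp add: power2_eq_iff_nonneg)
qed

lemma real_CS: "\<bar>Re (cinner (x::'a::chilbert_space) y)\<bar> \<le> norm x * norm y"
proof (cases "y = 0")
  case True then show ?thesis by simp
next
  case False
  let ?R = "Re (cinner x y)"
  have ny: "norm y > 0" using False by simp
  define t where "t = - ?R / (norm y)^2"
  have "0 \<le> (norm (x + scaleR t y))^2" by simp
  also have "\<dots> = (norm x)^2 + t^2 * (norm y)^2 + 2 * t * ?R"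
    by (simp add: norm_add_sq cinner_scaleR_right power_mult_distrib abs_mult power2_abs)
  also have "\<dots> = (norm x)^2 - ?R^2 / (norm y)^2"
    using ny by (simp add: t_def field_simps power2_eq_square)
  finally have "?R^2 \<le> (norm x * norm y)^2"
    using ny by (simp add: field_simps power_mult_distrib)
  then have "\<bar>?R\<bar>^2 \<le> (norm x * norm y)^2" by (simp only: power2_abs)
  then show ?thesis by (rule power2_le_imp_le) simp
qed

lemma CS: "cmod (cinner (x::'a::chilbert_space) y) \<le> norm x * norm y"
proof (cases "cinner x y = 0")
  case True then show ?thesis by simp
next
  case False
  define u where "u = cnj (cinner x y) / of_real (cmod (cinner x y))"
  have cu: "cmod u = 1" using False by (simp add: u_def norm_divide)
  have "u * cinner x y = of_real (cmod (cinner x y))"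
    using False by (simp add: u_def complex_norm_square[symmetric] power2_eq_square field_simps)
  then have "cmod (cinner x y) = Re (cinner (scaleC u x) y)"
    by (simp add: cinner_scaleC_left)
  also have "\<dots> \<le> norm (scaleC u x) * norm y" using real_CS[of "scaleC u x" y] by simp
  also have "\<dots> = norm x * norm y" by (simp add: norm_scaleC cu)
  finally show ?thesis .
qed


lemma riesz:
  fixes f :: "'a::chilbert_space \<Rightarrow> complex"
  assumes bl: "bounded_linear f" and fC: "\<And>c x. f (scaleC c x) = c * f x"
  shows "\<exists>z. \<forall>x. f x = cinner x z"
proof (cases "\<forall>x. f x = 0")
  case True then show ?thesis by (intro exI[of _ 0]) simp
next
  case False
  then obtain u where fu: "f u \<noteq> 0" by blast
  have fl: "linear f" using bl by (rule bounded_linear.linear)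
  note fsimps = linear_add[OF fl] linear_diff[OF fl] linear_scale[OF fl] linear_0[OF fl]
  define M where "M = {x. f x = 1}"
  have vM: "scaleC (1 / f u) u \<in> M" using fu by (simp add: M_def fC)
  define d where "d = Inf (norm ` M)"
  have bdd: "bdd_below (norm ` M)" by (rule bdd_belowI[of _ 0]) auto
  have ne: "norm ` M \<noteq> {}" using vM by blast
  have d_le: "d \<le> norm y" if "y \<in> M" for y
    unfolding d_def using bdd that by (simp add: cInf_lower)
  have d0: "0 \<le> d" using d_le[OF vM] unfolding d_def
    using ne by (simp add: le_cInf_iff bdd)
  have "\<exists>x\<in>M. norm x < d + 1 / (real n + 1)" for n :: nat
  proof -
    have "Inf (norm ` M) < d + 1 / (real n + 1)" unfolding d_def by (simp add: add_pos_pos)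
    from cInf_lessD[OF ne this] show ?thesis by blast
  qed
  then have "\<exists>xs. \<forall>n. xs n \<in> M \<and> norm (xs n) < d + 1 / (real n + 1)"
    by (intro choice) blast
  then obtain xs where xsM: "\<And>n. xs n \<in> M" and xsl: "\<And>n. norm (xs n) < d + 1 / (real n + 1)"
    by blast
  have sq: "(norm (xs n))^2 - d^2 \<le> (2*d+1) / (real n + 1)" for n
  proof -
    let ?e = "1 / (real n + 1)"
    have e1: "?e \<le> 1" "0 \<le> ?e" by (auto simp: field_simps)
    have a: "d \<le> norm (xs n)" using d_le[OF xsM] .
    have "(norm (xs n))^2 - d^2 = (norm (xs n) - d) * (norm (xs n) + d)" by (simp add: power2_eq_square algebra_simps)
    also have "\<dots> \<le> ?e * (2*d+1)"
    proof (rule mult_mono)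
      show "norm (xs n) - d \<le> ?e" using xsl[of n] by linarith
      show "norm (xs n) + d \<le> 2*d+1" using xsl[of n] e1 by linarith
    qed (use a e1 d0 in auto)
    finally show ?thesis by simp
  qed
  have par: "(norm (x - y))^2 \<le> 2 * ((norm x)^2 - d^2) + 2 * ((norm y)^2 - d^2)" if "x \<in> M" "y \<in> M" for x y
  proof -
    have "scaleR (1/2) (x + y) \<in> M" using that bl by (simp add: M_def fsimps scaleR_conv_of_real)
    then have "d \<le> norm (scaleR (1/2) (x + y))" by (rule d_le)
    then have "2 * d \<le> norm (x + y)" by simp
    then have "(2 * d)^2 \<le> (norm (x + y))^2" using d0 by (intro power_mono) auto
    then have "4 * d^2 \<le> (norm (x + y))^2" by (simp add: power_mult_distrib)
    then show ?thesis using norm_add_sq[of x y] norm_diff_sq[of x y] by argo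
  qed
  have cauchy: "Cauchy xs"
  proof (rule metric_CauchyI)
    fix e :: real assume e: "e > 0"
    obtain N :: nat where N0: "4 * (2*d+1) / e^2 < real N"
      using reals_Archimedean2 by blast
    then have N: "4 * (2*d+1) / e^2 < real N + 1" by linarith
    have "\<forall>m\<ge>N. \<forall>n\<ge>N. dist (xs m) (xs n) < e"
    proof (intro allI impI)
      fix m n assume mn: "N \<le> m" "N \<le> n"
      have h1: "(2*d+1) / (real m + 1) \<le> (2*d+1) / (real N + 1)"
        using mn d0 by (intro divide_left_mono) auto
      have h2: "(2*d+1) / (real n + 1) \<le> (2*d+1) / (real N + 1)"
        using mn d0 by (intro divide_left_mono) auto
      have "(norm (xs m - xs n))^2 \<le> 4 * ((2*d+1) / (real N + 1))"
        using par[OF xsM xsM, of m n] sq[of m] sq[of n] h1 h2 by argo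
      also have "\<dots> < e^2" using N e by (simp add: field_simps)
      finally have "(norm (xs m - xs n))^2 < e^2" .
      then have "norm (xs m - xs n) < e" using e by (simp add: power_less_imp_less_base)
      then show "dist (xs m) (xs n) < e" by (simp add: dist_norm)
    qed
    then show "\<exists>N. \<forall>m\<ge>N. \<forall>n\<ge>N. dist (xs m) (xs n) < e" by blast
  qed
  then obtain z0 where lim: "xs \<longlonglongrightarrow> z0" using Cauchy_convergent_iff convergent_def by blast
  have "(\<lambda>n. f (xs n)) \<longlonglongrightarrow> f z0" using bounded_linear.tendsto[OF bl lim] .
  moreover have "(\<lambda>n. f (xs n)) = (\<lambda>n. 1)" using xsM by (auto simp: M_def)
  ultimately have "(\<lambda>n. 1) \<longlonglongrightarrow> f z0" by simp
  then have fz0: "f z0 = 1" using LIMSEQ_const_iff by metis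
  have z0ne: "z0 \<noteq> 0" using fz0 fsimps by auto
  have nlim: "(\<lambda>n. norm (xs n)) \<longlonglongrightarrow> norm z0" using tendsto_norm[OF lim] .
  have dlim: "(\<lambda>n. norm (xs n)) \<longlonglongrightarrow> d"
  proof (rule tendsto_sandwich[of "\<lambda>n. d" _ _ "\<lambda>n. d + 1 / (real n + 1)"])
    show "\<forall>\<^sub>F n in sequentially. d \<le> norm (xs n)" using d_le[OF xsM] by simp
    show "\<forall>\<^sub>F n in sequentially. norm (xs n) \<le> d + 1 / (real n + 1)" using xsl by (simp add: less_imp_le)
    show "(\<lambda>n. d) \<longlonglongrightarrow> d" by simp
    show "(\<lambda>n. d + 1 / (real n + 1)) \<longlonglongrightarrow> d"
      using LIMSEQ_inverse_real_of_nat_add[of d]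
      by (simp add: inverse_eq_divide add.commute)
  qed
  have nz0: "norm z0 = d" using LIMSEQ_unique[OF nlim dlim] .
  have orth: "cinner z0 k = 0" if fk: "f k = 0" for k
  proof (rule ccontr)
    assume c0: "cinner z0 k \<noteq> 0"
    let ?c = "cinner z0 k"
    have k0: "k \<noteq> 0" using c0 by auto
    have nk: "norm k > 0" using k0 by simp
    define lam where "lam = ?c / of_real ((norm k)^2)"
    have "z0 - scaleC lam k \<in> M" using bl fz0 fk by (simp add: M_def fsimps fC)
    then have "norm z0 \<le> norm (z0 - scaleC lam k)" using d_le nz0 by simp
    then have A: "(norm z0)^2 \<le> (norm (z0 - scaleC lam k))^2" by (simp add: power_mono)
    have B: "cnj lam * ?c = of_real ((cmod ?c)^2 / (norm k)^2)"
      by (simp add: lam_def complex_norm_square[symmetric] of_real_power mult.commute)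
    have "(norm (z0 - scaleC lam k))^2 = (norm z0)^2 + (cmod lam * norm k)^2 - 2 * ((cmod ?c)^2 / (norm k)^2)"
      by (simp add: norm_diff_sq norm_scaleC cinner_scaleC_right B)
    also have "(cmod lam * norm k)^2 = (cmod ?c)^2 / (norm k)^2"
      using nk by (simp add: lam_def norm_divide norm_mult norm_power power_mult_distrib field_simps power2_eq_square)
    finally have "(norm z0)^2 \<le> (norm z0)^2 - (cmod ?c)^2 / (norm k)^2" using A by linarith
    moreover have "(cmod ?c)^2 / (norm k)^2 > 0" using c0 nk by simp
    ultimately show False by linarith
  qed
  define z where "z = scaleC (of_real (1 / (norm z0)^2)) z0"
  have "f x = cinner x z" for x
  proof -
    have "f (x - scaleC (f x) z0) = 0" using bl fz0 by (simp add: fsimps fC)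
    then have "cinner z0 (x - scaleC (f x) z0) = 0" by (rule orth)
    then have "cinner (x - scaleC (f x) z0) z0 = 0" by (metis cinner_commute complex_cnj_zero)
    then have "cinner x z0 = f x * of_real ((norm z0)^2)"
      by (simp add: cinner_diff_left cinner_scaleC_left cinner_self)
    then show ?thesis using z0ne by (simp add: z_def cinner_scaleC_right)
  qed
  then show ?thesis by blast
qed



lemma bl_lin:
  assumes "bounded_clinear A"
  shows "A (x + y) = A x + A y" "A (x - y) = A x - A y" "A (scaleR r x) = scaleR r (A x)"
    "A (scaleC c x) = scaleC c (A x)" "A 0 = 0" "bounded_linear A"
proof -
  have bl: "bounded_linear A" using assms by (simp add: bounded_clinear_def)
  then have l: "linear A" by (rule bounded_linear.linear)
  show "A (x + y) = A x + A y" "A (x - y) = A x - A y" "A (scaleR r x) = scaleR r (A x)" "A 0 = 0"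
    using linear_add[OF l] linear_diff[OF l] linear_scale[OF l] linear_0[OF l] by auto
  show "A (scaleC c x) = scaleC c (A x)" using assms by (simp add: bounded_clinear_def)
  show "bounded_linear A" by (rule bl)
qed

lemma adjoint_prop:
  assumes A: "bounded_clinear (A::'a::chilbert_space \<Rightarrow> 'a)"
  shows "cinner (A x) y = cinner x (cadjoint A y)"
proof -
  have "\<exists>z. \<forall>x. cinner (A x) y = cinner x z" for y
  proof (rule riesz)
    show "bounded_linear (\<lambda>x. cinner (A x) y)"
    proof (rule bounded_linear_intro[where K = "onorm A * norm y"])
      show "cinner (A (x + z)) y = cinner (A x) y + cinner (A z) y" for x z
        by (simp add: bl_lin[OF A] cinner_add_left)
      show "cinner (A (scaleR r x)) y = scaleR r (cinner (A x) y)" for r x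
        by (simp add: bl_lin[OF A] cinner_scaleR_left scaleR_conv_of_real)
      show "norm (cinner (A x) y) \<le> norm x * (onorm A * norm y)" for x
      proof -
        have "norm (cinner (A x) y) \<le> norm (A x) * norm y" by (rule CS)
        also have "\<dots> \<le> (onorm A * norm x) * norm y"
          by (rule mult_right_mono[OF onorm[OF bl_lin(6)[OF A]]]) simp
        finally show ?thesis by (simp add: ac_simps)
      qed
    qed
    show "cinner (A (scaleC c x)) y = c * cinner (A x) y" for c x
      by (simp add: bl_lin[OF A] cinner_scaleC_left)
  qed
  then have "\<forall>y. \<exists>z. \<forall>x. cinner (A x) y = cinner x z" by blast
  then have "\<exists>B. \<forall>y x. cinner (A x) y = cinner x (B y)" by (rule choice)
  then have "\<exists>B. \<forall>x y. cinner (A x) y = cinner x (B y)" by blast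
  then have "\<forall>x y. cinner (A x) y = cinner x (cadjoint A y)"
    unfolding cadjoint_def by (rule someI_ex)
  then show ?thesis by blast
qed

lemma adjoint_quad:
  assumes A: "bounded_clinear (A::'a::chilbert_space \<Rightarrow> 'a)"
  shows "cinner (cadjoint A x) x = cnj (cinner (A x) x)"
  using adjoint_prop[OF A, of x x] cinner_commute[of "cadjoint A x" x] by simp

lemma term_eq:
  assumes A: "bounded_clinear (A::'a::chilbert_space \<Rightarrow> 'a)"
  shows "cinner (scaleR a (A x) + scaleR b (cadjoint A x)) x
         = of_real a * cinner (A x) x + of_real b * cnj (cinner (A x) x)"
  by (simp add: cinner_add_left cinner_scaleR_left adjoint_quad[OF A])

lemma term_bounds:
  fixes q :: complex
  shows "(\<bar>a\<bar> - \<bar>b\<bar>) * cmod q \<le> cmod (of_real a * q + of_real b * cnj q)"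
    and "cmod (of_real a * q + of_real b * cnj q) \<le> (\<bar>a\<bar> + \<bar>b\<bar>) * cmod q"
proof -
  have e1: "cmod (of_real a * q) = \<bar>a\<bar> * cmod q" by (simp add: norm_mult)
  have e2: "cmod (of_real b * cnj q) = \<bar>b\<bar> * cmod q" by (simp add: norm_mult)
  show "(\<bar>a\<bar> - \<bar>b\<bar>) * cmod q \<le> cmod (of_real a * q + of_real b * cnj q)"
    using norm_diff_ineq[of "of_real a * q" "of_real b * cnj q"] e1 e2
    by (simp add: left_diff_distrib)
  show "cmod (of_real a * q + of_real b * cnj q) \<le> (\<bar>a\<bar> + \<bar>b\<bar>) * cmod q"
    using norm_triangle_ineq[of "of_real a * q" "of_real b * cnj q"] e1 e2
    by (simp add: distrib_right)
qed


lemma quad_scale: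
  assumes A: "bounded_clinear (A::'a::chilbert_space \<Rightarrow> 'a)"
  shows "cinner (A (scaleR r x)) (scaleR r x) = of_real (r^2) * cinner (A x) x"
  by (simp add: bl_lin[OF A] cinner_scaleR_left cinner_scaleR_right power2_eq_square)

lemma polar:
  assumes A: "bounded_clinear (A::'a::chilbert_space \<Rightarrow> 'a)"
    and W0: "0 \<le> W"
    and W: "\<And>x. norm x = 1 \<Longrightarrow> cmod (cinner (A x) x) \<le> W"
  shows "onorm A \<le> 2 * W"
proof -
  have Q: "cmod (cinner (A z) z) \<le> W * (norm z)^2" for z
  proof (cases "z = 0")
    case True then show ?thesis by (simp add: bl_lin[OF A])
  next
    case False
    define u where "u = scaleR (1 / norm z) z"
    have nu: "norm u = 1" using False by (simp add: u_def)
    have zu: "z = scaleR (norm z) u" using False by (simp add: u_def)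
    have "cinner (A z) z = of_real ((norm z)^2) * cinner (A u) u"
      by (subst zu, subst zu) (rule quad_scale[OF A])
    then have "cmod (cinner (A z) z) = (norm z)^2 * cmod (cinner (A u) u)"
      by (simp add: norm_mult norm_power)
    also have "\<dots> \<le> (norm z)^2 * W" using W[OF nu] by (simp add: mult_left_mono)
    finally show ?thesis by (simp add: ac_simps)
  qed
  have P1: "cinner (A (x + y)) (x + y) - cinner (A (x - y)) (x - y) = 2 * (cinner (A x) y + cinner (A y) x)" for x y
    by (simp add: bl_lin[OF A] cinner_add_left cinner_add_right cinner_diff_left cinner_diff_right algebra_simps)
  have par: "(norm (x + y))^2 + (norm (x - y))^2 = 2 * (norm x)^2 + 2 * (norm y)^2" for x y :: 'a
    by (simp add: norm_add_sq norm_diff_sq)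
  have S: "cmod (cinner (A x) y + cinner (A y) x) \<le> W * ((norm x)^2 + (norm y)^2)" for x y
  proof -
    have "2 * cmod (cinner (A x) y + cinner (A y) x) = cmod (cinner (A (x + y)) (x + y) - cinner (A (x - y)) (x - y))"
      unfolding P1 norm_mult by simp
    also have "\<dots> \<le> cmod (cinner (A (x + y)) (x + y)) + cmod (cinner (A (x - y)) (x - y))"
      by (rule norm_triangle_ineq4)
    also have "\<dots> \<le> W * (norm (x + y))^2 + W * (norm (x - y))^2" using Q by (intro add_mono)
    also have "\<dots> = 2 * (W * ((norm x)^2 + (norm y)^2))" by (simp only: distrib_left[symmetric] par)
    finally show ?thesis by simp
  qed
  have T: "cmod (cinner (A x) y) \<le> W * ((norm x)^2 + (norm y)^2)" for x y
  proof -
    let ?y = "scaleC \<i> y"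
    have ny: "norm ?y = norm y" by (simp add: norm_scaleC)
    have "cinner (A x) ?y + cinner (A ?y) x = - \<i> * (cinner (A x) y - cinner (A y) x)"
      by (simp add: bl_lin[OF A] cinner_scaleC_left cinner_scaleC_right algebra_simps)
    then have "cmod (cinner (A x) y - cinner (A y) x) = cmod (cinner (A x) ?y + cinner (A ?y) x)"
      by (simp add: norm_mult)
    also have "\<dots> \<le> W * ((norm x)^2 + (norm y)^2)" using S[of x ?y] ny by simp
    finally have D: "cmod (cinner (A x) y - cinner (A y) x) \<le> W * ((norm x)^2 + (norm y)^2)" .
    have "2 * cmod (cinner (A x) y) = cmod ((cinner (A x) y + cinner (A y) x) + (cinner (A x) y - cinner (A y) x))"
      by (simp add: norm_mult[symmetric])
    also have "\<dots> \<le> cmod (cinner (A x) y + cinner (A y) x) + cmod (cinner (A x) y - cinner (A y) x)"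
      by (rule norm_triangle_ineq)
    finally show ?thesis using S[of x y] D by linarith
  qed
  show ?thesis
  proof (rule onorm_bound)
    show "0 \<le> 2 * W" using W0 by simp
    show "norm (A x) \<le> 2 * W * norm x" for x
    proof (cases "A x = 0")
      case True then show ?thesis using W0 by simp
    next
      case False
      have x0: "x \<noteq> 0" using False bl_lin(5)[OF A] by auto
      have nA: "norm (A x) > 0" using False by simp
      define y where "y = scaleR (norm x / norm (A x)) (A x)"
      have ny: "norm y = norm x" using nA by (simp add: y_def)
      have "cinner (A x) y = of_real (norm x / norm (A x)) * of_real ((norm (A x))^2)"
        by (simp add: y_def cinner_scaleR_right cinner_self)
      also have "\<dots> = of_real (norm x * norm (A x))" using nA by (simp add: power2_eq_square)
      finally have "cmod (cinner (A x) y) = norm x * norm (A x)" by (simp add: norm_mult)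
      then have "norm x * norm (A x) \<le> W * (2 * (norm x)^2)" using T[of x y] ny by simp
      then have "norm x * norm (A x) \<le> norm x * (2 * W * norm x)" by (simp add: power2_eq_square ac_simps)
      then show ?thesis using x0 by simp
    qed
  qed
qed


lemma ex_onb:
  assumes dim2: "\<exists>x y :: 'a::chilbert_space. x \<noteq> 0 \<and> y \<noteq> 0 \<and> cinner x y = 0"
  shows "\<exists>e1 e2 :: 'a. norm e1 = 1 \<and> norm e2 = 1 \<and> cinner e1 e2 = 0"
proof -
  obtain x y :: 'a where xy: "x \<noteq> 0" "y \<noteq> 0" "cinner x y = 0" using dim2 by blast
  show ?thesis
    by (rule exI[of _ "scaleR (1 / norm x) x"], rule exI[of _ "scaleR (1 / norm y) y"])
      (use xy in \<open>simp add: cinner_scaleR_left cinner_scaleR_right\<close>)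
qed

lemma bessel2:
  fixes e1 e2 v :: "'a::chilbert_space"
  assumes n1: "norm e1 = 1" and n2: "norm e2 = 1" and o: "cinner e1 e2 = 0"
  shows "(cmod (cinner v e1))^2 + (cmod (cinner v e2))^2 \<le> (norm v)^2"
proof -
  let ?a = "cinner v e1" and ?b = "cinner v e2"
  let ?S = "(cmod ?a)^2 + (cmod ?b)^2"
  define u where "u = scaleC ?a e1 + scaleC ?b e2"
  have o2: "cinner e2 e1 = 0" using o cinner_commute[of e2 e1] by simp
  have nu: "(norm u)^2 = ?S"
    unfolding u_def norm_add_sq
    by (simp add: norm_scaleC n1 n2 cinner_scaleC_left cinner_scaleC_right o power_mult_distrib)
  have "cinner v u = cnj ?a * ?a + cnj ?b * ?b"
    by (simp add: u_def cinner_add_right cinner_scaleC_right)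
  also have "\<dots> = of_real ?S" by (simp add: complex_norm_square[symmetric] mult.commute)
  finally have cv: "cinner v u = of_real ?S" .
  have S0: "0 \<le> ?S" by simp
  have "?S = cmod (cinner v u)" unfolding cv norm_of_real using S0 by simp
  also have "\<dots> \<le> norm v * norm u" by (rule CS)
  finally have le: "?S \<le> norm v * norm u" .
  have "?S * ?S \<le> (norm v)^2 * ?S"
  proof -
    have "?S * ?S \<le> (norm v * norm u)^2" using le S0 by (metis power2_eq_square power_mono)
    also have "\<dots> = (norm v)^2 * ?S" by (simp add: power_mult_distrib nu)
    finally show ?thesis .
  qed
  then show ?thesis
    using S0 by (cases "?S = 0") (simp, simp add: mult_le_cancel_right)
qed

lemma amgm2: "(p::real) * q \<le> (p^2 + q^2) / 2"
proof -
  have "0 \<le> (p - q)^2" by simp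
  then show ?thesis by (simp add: power2_diff)
qed

definition shiftop :: "'a::chilbert_space \<Rightarrow> 'a \<Rightarrow> 'a \<Rightarrow> 'a" where
  "shiftop e1 e2 v = scaleC (cinner v e1) e2"

lemma shiftop_props:
  fixes e1 e2 :: "'a::chilbert_space"
  assumes n1: "norm e1 = 1" and n2: "norm e2 = 1" and o: "cinner e1 e2 = 0"
  shows "bounded_clinear (shiftop e1 e2)" "onorm (shiftop e1 e2) = 1"
    "\<And>v. norm v = 1 \<Longrightarrow> cmod (cinner (shiftop e1 e2 v) v) \<le> 1/2"
proof -
  have nS: "norm (shiftop e1 e2 v) = cmod (cinner v e1)" for v
    by (simp add: shiftop_def norm_scaleC n2)
  have bl: "bounded_linear (shiftop e1 e2)"
  proof (rule bounded_linear_intro[where K = 1])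
    show "shiftop e1 e2 (x + y) = shiftop e1 e2 x + shiftop e1 e2 y" for x y
      by (simp add: shiftop_def cinner_add_left scaleC_add_left)
    show "shiftop e1 e2 (scaleR r x) = scaleR r (shiftop e1 e2 x)" for r x
      by (simp add: shiftop_def cinner_scaleR_left scaleR_scaleC scaleC_scaleC cinner_scaleC_left)
    show "norm (shiftop e1 e2 x) \<le> norm x * 1" for x
      using CS[of x e1] by (simp add: nS n1)
  qed
  show bc: "bounded_clinear (shiftop e1 e2)"
    unfolding bounded_clinear_def using bl
    by (simp add: shiftop_def cinner_scaleC_left scaleC_scaleC)
  show "onorm (shiftop e1 e2) = 1"
  proof (rule antisym)
    show "onorm (shiftop e1 e2) \<le> 1"
      by (rule onorm_bound) (use CS[of _ e1] n1 nS in auto)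
    have "norm (shiftop e1 e2 e1) / norm e1 \<le> onorm (shiftop e1 e2)" by (rule le_onorm[OF bl])
    moreover have "norm (shiftop e1 e2 e1) / norm e1 = 1" using n1 by (simp add: nS cinner_self)
    ultimately show "1 \<le> onorm (shiftop e1 e2)" by simp
  qed
  fix v :: 'a assume nv: "norm v = 1"
  have "cinner (shiftop e1 e2 v) v = cinner v e1 * cinner e2 v"
    by (simp add: shiftop_def cinner_scaleC_left)
  then have "cmod (cinner (shiftop e1 e2 v) v) = cmod (cinner v e1) * cmod (cinner v e2)"
    using cinner_commute[of e2 v] by (simp add: norm_mult)
  also have "\<dots> \<le> ((cmod (cinner v e1))^2 + (cmod (cinner v e2))^2) / 2"
    by (rule amgm2)
  also have "\<dots> \<le> 1/2" using bessel2[OF n1 n2 o, of v] nv by simp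
  finally show "cmod (cinner (shiftop e1 e2 v) v) \<le> 1/2" .
qed


lemma term_upper:
  assumes A: "bounded_clinear (A::'a::chilbert_space \<Rightarrow> 'a)" and nx: "norm x = 1"
  shows "cmod (cinner (scaleR a (A x) + scaleR b (cadjoint A x)) x) \<le> (\<bar>a\<bar> + \<bar>b\<bar>) * cmod (cinner (A x) x)"
    and "cmod (cinner (scaleR a (A x) + scaleR b (cadjoint A x)) x) \<le> (\<bar>a\<bar> + \<bar>b\<bar>) * onorm A"
proof -
  show 1: "cmod (cinner (scaleR a (A x) + scaleR b (cadjoint A x)) x) \<le> (\<bar>a\<bar> + \<bar>b\<bar>) * cmod (cinner (A x) x)"
    unfolding term_eq[OF A] by (rule term_bounds(2))
  have "cmod (cinner (A x) x) \<le> norm (A x) * norm x" by (rule CS)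
  also have "\<dots> \<le> onorm A" using onorm[OF bl_lin(6)[OF A], of x] nx by simp
  finally have "(\<bar>a\<bar> + \<bar>b\<bar>) * cmod (cinner (A x) x) \<le> (\<bar>a\<bar> + \<bar>b\<bar>) * onorm A"
    by (intro mult_left_mono) auto
  then show "cmod (cinner (scaleR a (A x) + scaleR b (cadjoint A x)) x) \<le> (\<bar>a\<bar> + \<bar>b\<bar>) * onorm A"
    using 1 by linarith
qed

lemma term_lower:
  assumes A: "bounded_clinear (A::'a::chilbert_space \<Rightarrow> 'a)"
  shows "(\<bar>a\<bar> - \<bar>b\<bar>) * cmod (cinner (A x) x) \<le> cmod (cinner (scaleR a (A x) + scaleR b (cadjoint A x)) x)"
  unfolding term_eq[OF A] by (rule term_bounds(1))

lemma radius_lower: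
  assumes A: "bounded_clinear (A::'a::chilbert_space \<Rightarrow> 'a)" and oA: "onorm A = 1"
    and ne: "\<exists>x::'a. norm x = 1"
  shows "(\<bar>\<phi> t\<bar> - \<bar>\<psi> t\<bar>) / 2 \<le> weighted_numerical_radius \<phi> \<psi> t A"
proof -
  let ?T = "\<lambda>x. cmod (cinner (scaleR (\<phi> t) (A x) + scaleR (\<psi> t) (cadjoint A x)) x)"
  let ?R = "weighted_numerical_radius \<phi> \<psi> t A"
  have R: "?R = (SUP x\<in>{x::'a. norm x = 1}. ?T x)" by (simp add: weighted_numerical_radius_def)
  have bdd: "bdd_above (?T ` {x. norm x = 1})"
    by (rule bdd_aboveI2[where M = "(\<bar>\<phi> t\<bar> + \<bar>\<psi> t\<bar>) * onorm A"]) (use term_upper(2)[OF A] in auto)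
  have le: "?T x \<le> ?R" if "norm x = 1" for x
    unfolding R by (rule cSUP_upper[OF _ bdd]) (use that in simp)
  obtain x0 :: 'a where x0: "norm x0 = 1" using ne by blast
  have R0: "0 \<le> ?R" using le[OF x0] by (meson norm_ge_zero order_trans)
  show ?thesis
  proof (cases "\<bar>\<phi> t\<bar> - \<bar>\<psi> t\<bar> \<le> 0")
    case True
    then have "(\<bar>\<phi> t\<bar> - \<bar>\<psi> t\<bar>) / 2 \<le> 0" by simp
    then show ?thesis using R0 by (rule order_trans)
  next
    case False
    let ?c = "\<bar>\<phi> t\<bar> - \<bar>\<psi> t\<bar>"
    have c: "?c > 0" using False by linarith
    have "onorm A \<le> 2 * (?R / ?c)"
    proof (rule polar[OF A])
      show "0 \<le> ?R / ?c" using R0 c by simp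
      fix x :: 'a assume nx: "norm x = 1"
      have "?c * cmod (cinner (A x) x) \<le> ?R" using term_lower[OF A, of "\<phi> t" "\<psi> t" x] le[OF nx] by linarith
      then show "cmod (cinner (A x) x) \<le> ?R / ?c" using c by (simp add: field_simps)
    qed
    then show ?thesis using oA c by (simp add: field_simps)
  qed
qed

lemma radius_upper_shift:
  fixes e1 e2 :: "'a::chilbert_space"
  assumes n1: "norm e1 = 1" and n2: "norm e2 = 1" and o: "cinner e1 e2 = 0"
  shows "weighted_numerical_radius \<phi> \<psi> t (shiftop e1 e2) \<le> (\<bar>\<phi> t\<bar> + \<bar>\<psi> t\<bar>) / 2"
  unfolding weighted_numerical_radius_def
proof (rule cSUP_least)
  show "{x::'a. norm x = 1} \<noteq> {}" using n1 by blast
  fix x :: 'a assume "x \<in> {x. norm x = 1}"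
  then have nx: "norm x = 1" by simp
  note P = shiftop_props[OF n1 n2 o]
  have "cmod (cinner (scaleR (\<phi> t) (shiftop e1 e2 x) + scaleR (\<psi> t) (cadjoint (shiftop e1 e2) x)) x)
        \<le> (\<bar>\<phi> t\<bar> + \<bar>\<psi> t\<bar>) * cmod (cinner (shiftop e1 e2 x) x)"
    by (rule term_upper(1)[OF P(1) nx])
  also have "\<dots> \<le> (\<bar>\<phi> t\<bar> + \<bar>\<psi> t\<bar>) * (1/2)"
    by (rule mult_left_mono[OF P(3)[OF nx]]) simp
  finally show "cmod (cinner (scaleR (\<phi> t) (shiftop e1 e2 x) + scaleR (\<psi> t) (cadjoint (shiftop e1 e2) x)) x)
        \<le> (\<bar>\<phi> t\<bar> + \<bar>\<psi> t\<bar>) / 2" by simp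
qed

lemma index_bounds:
  assumes dim2: "\<exists>x y :: 'a::chilbert_space. x \<noteq> 0 \<and> y \<noteq> 0 \<and> cinner x y = 0"
  shows "(\<bar>\<phi> t\<bar> - \<bar>\<psi> t\<bar>) / 2 \<le> weighted_numerical_index TYPE('a) \<phi> \<psi> t"
    and "weighted_numerical_index TYPE('a) \<phi> \<psi> t \<le> (\<bar>\<phi> t\<bar> + \<bar>\<psi> t\<bar>) / 2"
proof -
  obtain e1 e2 :: 'a where n1: "norm e1 = 1" and n2: "norm e2 = 1" and o: "cinner e1 e2 = 0"
    using ex_onb[OF dim2] by blast
  note P = shiftop_props[OF n1 n2 o]
  let ?S = "{A::'a \<Rightarrow> 'a. bounded_clinear A \<and> onorm A = 1}"
  have inS: "shiftop e1 e2 \<in> ?S" using P by simp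
  have ne: "\<exists>x::'a. norm x = 1" using n1 by blast
  have lo: "(\<bar>\<phi> t\<bar> - \<bar>\<psi> t\<bar>) / 2 \<le> weighted_numerical_radius \<phi> \<psi> t A" if "A \<in> ?S" for A
    using radius_lower[of A, OF _ _ ne] that by simp
  show "(\<bar>\<phi> t\<bar> - \<bar>\<psi> t\<bar>) / 2 \<le> weighted_numerical_index TYPE('a) \<phi> \<psi> t"
    unfolding weighted_numerical_index_def
    by (rule cINF_greatest) (use inS lo in auto)
  have bdd: "bdd_below ((weighted_numerical_radius \<phi> \<psi> t) ` ?S)"
    by (rule bdd_belowI2[where m = "(\<bar>\<phi> t\<bar> - \<bar>\<psi> t\<bar>) / 2"]) (use lo in auto)
  have "weighted_numerical_index TYPE('a) \<phi> \<psi> t \<le> weighted_numerical_radius \<phi> \<psi> t (shiftop e1 e2)"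
    unfolding weighted_numerical_index_def by (rule cINF_lower[OF bdd inS])
  also have "\<dots> \<le> (\<bar>\<phi> t\<bar> + \<bar>\<psi> t\<bar>) / 2" by (rule radius_upper_shift[OF n1 n2 o])
  finally show "weighted_numerical_index TYPE('a) \<phi> \<psi> t \<le> (\<bar>\<phi> t\<bar> + \<bar>\<psi> t\<bar>) / 2" .
qed

theorem corollary4p9:
  fixes \<phi> \<psi> :: "nat \<Rightarrow> real \<Rightarrow> real"
  assumes dim2: "\<exists>x y :: 'a::chilbert_space. x \<noteq> 0 \<and> y \<noteq> 0 \<and> cinner x y = 0"
    and cont_phi: "\<And>n. n \<ge> 1 \<Longrightarrow> continuous_on {0..1} (\<phi> n)"
    and cont_psi: "\<And>n. n \<ge> 1 \<Longrightarrow> continuous_on {0..1} (\<psi> n)"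
    and lim_phi: "\<And>t. t \<in> {0..1} \<Longrightarrow> (\<lambda>n. \<phi> n t) \<longlonglongrightarrow> 1"
    and lim_psi: "\<And>t. t \<in> {0..1} \<Longrightarrow> (\<lambda>n. \<psi> n t) \<longlonglongrightarrow> 0"
  shows "\<forall>t\<in>{0..1}. (\<lambda>n. weighted_numerical_index TYPE('a) (\<phi> n) (\<psi> n) t) \<longlonglongrightarrow> 1/2"
proof
  fix t :: real assume t: "t \<in> {0..1}"
  have l1: "(\<lambda>n. (\<bar>\<phi> n t\<bar> - \<bar>\<psi> n t\<bar>) / 2) \<longlonglongrightarrow> (\<bar>1\<bar> - \<bar>0\<bar>) / 2"
    by (intro tendsto_intros lim_phi[OF t] lim_psi[OF t]) simp_all
  have l2: "(\<lambda>n. (\<bar>\<phi> n t\<bar> + \<bar>\<psi> n t\<bar>) / 2) \<longlonglongrightarrow> (\<bar>1\<bar> + \<bar>0\<bar>) / 2"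
    by (intro tendsto_intros lim_phi[OF t] lim_psi[OF t]) simp_all
  show "(\<lambda>n. weighted_numerical_index TYPE('a) (\<phi> n) (\<psi> n) t) \<longlonglongrightarrow> 1/2"
  proof (rule tendsto_sandwich[of "\<lambda>n. (\<bar>\<phi> n t\<bar> - \<bar>\<psi> n t\<bar>) / 2" _ _ "\<lambda>n. (\<bar>\<phi> n t\<bar> + \<bar>\<psi> n t\<bar>) / 2"])
    show "\<forall>\<^sub>F n in sequentially. (\<bar>\<phi> n t\<bar> - \<bar>\<psi> n t\<bar>) / 2 \<le> weighted_numerical_index TYPE('a) (\<phi> n) (\<psi> n) t"
      using index_bounds(1)[OF dim2] by simp
    show "\<forall>\<^sub>F n in sequentially. weighted_numerical_index TYPE('a) (\<phi> n) (\<psi> n) t \<le> (\<bar>\<phi> n t\<bar> + \<bar>\<psi> n t\<bar>) / 2"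
      using index_bounds(2)[OF dim2] by simp
    show "(\<lambda>n. (\<bar>\<phi> n t\<bar> - \<bar>\<psi> n t\<bar>) / 2) \<longlonglongrightarrow> 1/2" using l1 by simp
    show "(\<lambda>n. (\<bar>\<phi> n t\<bar> + \<bar>\<psi> n t\<bar>) / 2) \<longlonglongrightarrow> 1/2" using l2 by simp
  qed
qed

end
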